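(* Let $\mathbf X$ be a CAT(0) cube complex with no infinite family of pairwise-crossing hyperplanes, and suppose $\mathbf X$ is fully visible. Then $\mathbf X$ is an optical space.
   Context: A CAT(0) cube complex is a simply connected cube complex (cubes $[-\frac12,\frac12]^d$, $d$ finite) with flag vertex links; hyperplanes are connected subspaces meeting each cube in a midcube or not at all, each separating $\mathbf X$ into two halfspaces. Two hyperplanes cross if all four intersections of their halfspaces are nonempty. Combinatorial geodesics (rays, bi-infinite geodesics) are geodesics in the 1-skeleton path metric sending integers to 0-cubes; $\mathcal W(\alpha)$ is the set of hyperplanes dual to 1-cubes of $\alpha$. A set $\mathcal U$ of hyperplanes is inseparable if every hyperplane separating two elements of $\mathcal U$ lies in $\mathcal U$; unidirectional if each $U\in\mathcal U$ has a halfspace containing only finitely many elements of $\mathcal U$; a facing triple is three distinct hyperplanes each having a halfspace containing the other two. A unidirectional boundary set (UBS) is an infinite, inseparable, unidirectional set of hyperplanes with no facing triple; UBSs are almost-equivalent if their symmetric difference is finite; a UBS is minimal if every UBS inside it is almost-equivalent to it. Every UBS is almost-equivalent to a disjoint union of $k<\infty$ minimal UBSs $\mathcal U_1,\dots,\mathcal U_k$ with each element of $\mathcal U_j$ crossing all but finitely many elements of $\mathcal U_i$ for $i<j$, $k$ depending only on the class ($k$-dimensional). A $k$-simplex at infinity is an almost-equivalence class of $(k+1)$-dimensional UBSs, $u\le v$ iff there are representatives $\mathcal U\subseteq\mathcal V$; $\partial_\triangle\mathbf X$ is the geometric realization of the resulting simplicial complex. A simplex is visible if it is the class of $\mathcal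 W(\gamma)$ for a combinatorial geodesic ray $\gamma$; $\mathbf X$ is fully visible if every simplex of $\partial_\triangle\mathbf X$ is visible. A pair $u,v$ of visible simplices is a visible pair if there is a bi-infinite combinatorial geodesic $\gamma:\mathbb R\to\mathbf X$ with $\mathcal W(\gamma((-\infty,0]))$ representing $u$ and $\mathcal W(\gamma([0,\infty)))$ representing $v$. $\mathbf X$ is an optical space if, whenever a pair $u,v$ of 0-simplices of $\partial_\triangle\mathbf X$ is not a visible pair, $u=v$. *)

theory Defs
  imports Main
begin

text \<open>A CAT(0) cube complex is represented by its 1-skeleton, a median graph
  (Chepoi / Roller / Gerasimov: 1-skeleta of CAT(0) cube complexes are exactly
  median graphs, and the complex is recovered by filling in cubes).\<close>

definition walk :: "('a \<Rightarrow> 'a \<Rightarrow> bool) \<Rightarrow> 'a list \<Rightarrow> bool" where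
  "walk E xs \<longleftrightarrow> xs \<noteq> [] \<and> (\<forall>i. Suc i < length xs \<longrightarrow> E (xs ! i) (xs ! Suc i))"

definition connected_graph :: "('a \<Rightarrow> 'a \<Rightarrow> bool) \<Rightarrow> bool" where
  "connected_graph E \<longleftrightarrow> (\<forall>x y. \<exists>xs. walk E xs \<and> hd xs = x \<and> last xs = y)"

definition gdist :: "('a \<Rightarrow> 'a \<Rightarrow> bool) \<Rightarrow> 'a \<Rightarrow> 'a \<Rightarrow> nat" where
  "gdist E x y = (LEAST n. \<exists>xs. walk E xs \<and> hd xs = x \<and> last xs = y \<and> length xs = Suc n)"

definition interval :: "('a \<Rightarrow> 'a \<Rightarrow> bool) \<Rightarrow> 'a \<Rightarrow> 'a \<Rightarrow> 'a set" where
  "interval E x y = {m. gdist E x m + gdist E m y = gdist E x y}"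

definition median_graph :: "('a \<Rightarrow> 'a \<Rightarrow> bool) \<Rightarrow> bool" where
  "median_graph E \<longleftrightarrow> (\<forall>x y. E x y \<longrightarrow> E y x) \<and> (\<forall>x. \<not> E x x) \<and> connected_graph E \<and>
     (\<forall>x y z. \<exists>!m. m \<in> interval E x y \<inter> interval E y z \<inter> interval E x z)"

abbreviation CAT0_cube_complex :: "('a \<Rightarrow> 'a \<Rightarrow> bool) \<Rightarrow> bool" where
  "CAT0_cube_complex E \<equiv> median_graph E"

text \<open>Halfspace (vertex set) of the hyperplane dual to the edge uv containing u.\<close>
definition halfsp :: "('a \<Rightarrow> 'a \<Rightarrow> bool) \<Rightarrow> 'a \<Rightarrow> 'a \<Rightarrow> 'a set" where
  "halfsp E u v = {x. gdist E x u < gdist E x v}"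

text \<open>A hyperplane is represented by the (unordered) pair of its two halfspaces.\<close>
definition dual :: "('a \<Rightarrow> 'a \<Rightarrow> bool) \<Rightarrow> 'a \<Rightarrow> 'a \<Rightarrow> 'a set set" where
  "dual E u v = {halfsp E u v, halfsp E v u}"

definition hyperplanes :: "('a \<Rightarrow> 'a \<Rightarrow> bool) \<Rightarrow> 'a set set set" where
  "hyperplanes E = {dual E u v | u v. E u v}"

definition cross :: "'a set set \<Rightarrow> 'a set set \<Rightarrow> bool" where
  "cross H U \<longleftrightarrow> (\<forall>h\<in>H. \<forall>u\<in>U. h \<inter> u \<noteq> {})"

definition lies_in :: "'a set set \<Rightarrow> 'a set \<Rightarrow> 'a set set \<Rightarrow> bool" where
  "lies_in H s U \<longleftrightarrow> s \<in> H \<and> U \<noteq> H \<and> (\<exists>u\<in>U. u \<subseteq> s)"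

definition separates :: "'a set set \<Rightarrow> 'a set set \<Rightarrow> 'a set set \<Rightarrow> bool" where
  "separates H U U' \<longleftrightarrow> (\<exists>s\<in>H. \<exists>s'\<in>H. s \<noteq> s' \<and> lies_in H s U \<and> lies_in H s' U')"

definition inseparable :: "('a \<Rightarrow> 'a \<Rightarrow> bool) \<Rightarrow> 'a set set set \<Rightarrow> bool" where
  "inseparable E \<U> \<longleftrightarrow> (\<forall>U\<in>\<U>. \<forall>U'\<in>\<U>. \<forall>H\<in>hyperplanes E. separates H U U' \<longrightarrow> H \<in> \<U>)"

definition unidirectional :: "'a set set set \<Rightarrow> bool" where
  "unidirectional \<U> \<longleftrightarrow> (\<forall>U\<in>\<U>. \<exists>s\<in>U. finite {W\<in>\<U>. lies_in U s W})"

definition facing_triple :: "'a set set \<Rightarrow> 'a set set \<Rightarrow> 'a set set \<Rightarrow> bool" where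
  "facing_triple A B C \<longleftrightarrow> A \<noteq> B \<and> B \<noteq> C \<and> A \<noteq> C \<and>
     (\<exists>s\<in>A. lies_in A s B \<and> lies_in A s C) \<and>
     (\<exists>s\<in>B. lies_in B s A \<and> lies_in B s C) \<and>
     (\<exists>s\<in>C. lies_in C s A \<and> lies_in C s B)"

definition UBS :: "('a \<Rightarrow> 'a \<Rightarrow> bool) \<Rightarrow> 'a set set set \<Rightarrow> bool" where
  "UBS E \<U> \<longleftrightarrow> \<U> \<subseteq> hyperplanes E \<and> infinite \<U> \<and> inseparable E \<U> \<and> unidirectional \<U> \<and>
     \<not> (\<exists>A\<in>\<U>. \<exists>B\<in>\<U>. \<exists>C\<in>\<U>. facing_triple A B C)"

definition almost_equiv :: "'b set \<Rightarrow> 'b set \<Rightarrow> bool" where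
  "almost_equiv A B \<longleftrightarrow> finite ((A - B) \<union> (B - A))"

definition minimal_UBS :: "('a \<Rightarrow> 'a \<Rightarrow> bool) \<Rightarrow> 'a set set set \<Rightarrow> bool" where
  "minimal_UBS E \<U> \<longleftrightarrow> UBS E \<U> \<and> (\<forall>\<V>. \<V> \<subseteq> \<U> \<and> UBS E \<V> \<longrightarrow> almost_equiv \<V> \<U>)"

definition UBS_dim :: "('a \<Rightarrow> 'a \<Rightarrow> bool) \<Rightarrow> 'a set set set \<Rightarrow> nat \<Rightarrow> bool" where
  "UBS_dim E \<U> k \<longleftrightarrow> (\<exists>Us :: nat \<Rightarrow> 'a set set set.
      (\<forall>i<k. minimal_UBS E (Us i)) \<and>
      (\<forall>i<k. \<forall>j<k. i \<noteq> j \<longrightarrow> Us i \<inter> Us j = {}) \<and>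
      (\<forall>i j. i < j \<and> j < k \<longrightarrow> (\<forall>H\<in>Us j. finite {U\<in>Us i. \<not> cross H U})) \<and>
      almost_equiv \<U> (\<Union>i<k. Us i))"

definition geodesic_ray :: "('a \<Rightarrow> 'a \<Rightarrow> bool) \<Rightarrow> (nat \<Rightarrow> 'a) \<Rightarrow> bool" where
  "geodesic_ray E \<gamma> \<longleftrightarrow> (\<forall>m n. int (gdist E (\<gamma> m) (\<gamma> n)) = \<bar>int m - int n\<bar>)"

definition geodesic_line :: "('a \<Rightarrow> 'a \<Rightarrow> bool) \<Rightarrow> (int \<Rightarrow> 'a) \<Rightarrow> bool" where
  "geodesic_line E \<gamma> \<longleftrightarrow> (\<forall>m n. int (gdist E (\<gamma> m) (\<gamma> n)) = \<bar>m - n\<bar>)"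

definition W_ray :: "('a \<Rightarrow> 'a \<Rightarrow> bool) \<Rightarrow> (nat \<Rightarrow> 'a) \<Rightarrow> 'a set set set" where
  "W_ray E \<gamma> = {dual E (\<gamma> n) (\<gamma> (Suc n)) | n. True}"

definition W_neg :: "('a \<Rightarrow> 'a \<Rightarrow> bool) \<Rightarrow> (int \<Rightarrow> 'a) \<Rightarrow> 'a set set set" where
  "W_neg E \<gamma> = {dual E (\<gamma> (n - 1)) (\<gamma> n) | n. n \<le> 0}"

definition W_pos :: "('a \<Rightarrow> 'a \<Rightarrow> bool) \<Rightarrow> (int \<Rightarrow> 'a) \<Rightarrow> 'a set set set" where
  "W_pos E \<gamma> = {dual E (\<gamma> n) (\<gamma> (n + 1)) | n. n \<ge> 0}"

text \<open>Simplices at infinity are represented by UBS representatives: a k-simplex is the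
  almost-equivalence class of a (k+1)-dimensional UBS.\<close>
definition visible :: "('a \<Rightarrow> 'a \<Rightarrow> bool) \<Rightarrow> 'a set set set \<Rightarrow> bool" where
  "visible E \<U> \<longleftrightarrow> (\<exists>\<gamma>. geodesic_ray E \<gamma> \<and> almost_equiv (W_ray E \<gamma>) \<U>)"

definition fully_visible :: "('a \<Rightarrow> 'a \<Rightarrow> bool) \<Rightarrow> bool" where
  "fully_visible E \<longleftrightarrow> (\<forall>\<U> k. UBS E \<U> \<and> UBS_dim E \<U> (Suc k) \<longrightarrow> visible E \<U>)"

definition visible_pair :: "('a \<Rightarrow> 'a \<Rightarrow> bool) \<Rightarrow> 'a set set set \<Rightarrow> 'a set set set \<Rightarrow> bool" where
  "visible_pair E \<U> \<V> \<longleftrightarrow> visible E \<U> \<and> visible E \<V> \<and>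
     (\<exists>\<gamma>. geodesic_line E \<gamma> \<and> almost_equiv (W_neg E \<gamma>) \<U> \<and> almost_equiv (W_pos E \<gamma>) \<V>)"

definition optical :: "('a \<Rightarrow> 'a \<Rightarrow> bool) \<Rightarrow> bool" where
  "optical E \<longleftrightarrow> (\<forall>\<U> \<V>. UBS E \<U> \<and> UBS_dim E \<U> 1 \<and> UBS E \<V> \<and> UBS_dim E \<V> 1 \<and>
      \<not> visible_pair E \<U> \<V> \<longrightarrow> almost_equiv \<U> \<V>)"

definition no_infinite_crossing_family :: "('a \<Rightarrow> 'a \<Rightarrow> bool) \<Rightarrow> bool" where
  "no_infinite_crossing_family E \<longleftrightarrow>
     \<not> (\<exists>F. F \<subseteq> hyperplanes E \<and> infinite F \<and> (\<forall>H\<in>F. \<forall>U\<in>F. H \<noteq> U \<longrightarrow> cross H U))"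

end

theory Submission
  imports Defs
begin


lemma walk_Cons_iff: "walk E (x # xs) \<longleftrightarrow> (xs = [] \<or> (E x (hd xs) \<and> walk E xs))"
proof (cases xs)
  case Nil then show ?thesis by (simp add: walk_def)
next
  case (Cons y ys)
  show ?thesis
  proof
    assume w: "walk E (x # xs)"
    have "E x (hd xs)" using w Cons by (auto simp: walk_def)
    moreover have "walk E xs" unfolding walk_def
    proof (intro conjI allI impI)
      show "xs \<noteq> []" using Cons by simp
      fix i assume "Suc i < length xs"
      then show "E (xs ! i) (xs ! Suc i)" using w unfolding walk_def
        by (metis Suc_less_eq length_Cons nth_Cons_Suc)
    qed
    ultimately show "xs = [] \<or> (E x (hd xs) \<and> walk E xs)" by simp
  next
    assume h: "xs = [] \<or> (E x (hd xs) \<and> walk E xs)"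
    then have e: "E x (hd xs)" and w: "walk E xs" using Cons by auto
    show "walk E (x # xs)" unfolding walk_def
    proof (intro conjI allI impI)
      show "x # xs \<noteq> []" by simp
      fix i assume i: "Suc i < length (x # xs)"
      show "E ((x # xs) ! i) ((x # xs) ! Suc i)"
      proof (cases i)
        case 0 then show ?thesis using e Cons by simp
      next
        case (Suc j) then show ?thesis using w i unfolding walk_def by simp
      qed
    qed
  qed
qed

lemma walk_single[simp]: "walk E [x]" by (simp add: walk_def)

lemma walk_append: "walk E xs \<Longrightarrow> walk E ys \<Longrightarrow> last xs = hd ys \<Longrightarrow> walk E (xs @ tl ys)"
proof (induction xs)
  case Nil then show ?case by (simp add: walk_def)
next
  case (Cons x xs)
  show ?case
  proof (cases xs)
    case Nil
    then show ?thesis using Cons.prems by (cases ys) (auto simp: walk_def)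
  next
    case (Cons y zs)
    note Cons' = this
    have "walk E xs" "E x (hd xs)" using Cons.prems Cons' by (auto simp: walk_Cons_iff)
    then have "walk E (xs @ tl ys)" using Cons.IH Cons.prems Cons' by simp
    then show ?thesis using \<open>E x (hd xs)\<close> Cons' by (simp add: walk_Cons_iff)
  qed
qed

lemma walk_rev: assumes "\<And>x y. E x y \<Longrightarrow> E y x" "walk E xs" shows "walk E (rev xs)"
  using assms(2)
proof (induction xs)
  case Nil then show ?case by (simp add: walk_def)
next
  case (Cons x xs)
  show ?case
  proof (cases xs)
    case Nil then show ?thesis by simp
  next
    case (Cons y zs)
    note Cons' = this
    have w: "walk E xs" and e: "E x (hd xs)" using Cons.prems Cons' by (auto simp: walk_Cons_iff)
    have "walk E (rev xs @ tl [hd xs, x])"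
      by (rule walk_append) (use Cons.IH w e assms(1) Cons' in \<open>auto simp: walk_Cons_iff last_rev\<close>)
    then show ?thesis using Cons' by simp
  qed
qed



locale mg = fixes E :: "'a \<Rightarrow> 'a \<Rightarrow> bool" assumes med: "median_graph E"
begin

abbreviation d where "d \<equiv> gdist E"

lemma symE: "E x y \<Longrightarrow> E y x" using med unfolding median_graph_def by blast
lemma irr: "\<not> E x x" using med unfolding median_graph_def by blast
lemma conn: "connected_graph E" using med unfolding median_graph_def by blast
lemma median_ex1: "\<exists>!m. m \<in> interval E x y \<inter> interval E y z \<inter> interval E x z"
  using med unfolding median_graph_def by blast

lemma gdist_ex: "\<exists>xs. walk E xs \<and> hd xs = x \<and> last xs = y \<and> length xs = Suc (d x y)"
proof -
  obtain xs where xs: "walk E xs" "hd xs = x" "last xs = y" using conn unfolding connected_graph_def by blast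
  then obtain n where "length xs = Suc n" by (cases xs) (auto simp: walk_def)
  then have "\<exists>n xs. walk E xs \<and> hd xs = x \<and> last xs = y \<and> length xs = Suc n" using xs by blast
  then show ?thesis unfolding gdist_def by (rule LeastI_ex)
qed

lemma gdist_le: "walk E xs \<Longrightarrow> hd xs = x \<Longrightarrow> last xs = y \<Longrightarrow> d x y \<le> length xs - 1"
proof -
  assume a: "walk E xs" "hd xs = x" "last xs = y"
  then have "length xs = Suc (length xs - 1)" by (cases xs) (auto simp: walk_def)
  then show ?thesis unfolding gdist_def using a by (intro Least_le) metis
qed

lemma d_refl[simp]: "d x x = 0"
  using gdist_le[of "[x]" x x] by simp

lemma d_zero: "d x y = 0 \<Longrightarrow> x = y"
proof -
  assume "d x y = 0"
  then obtain xs where "walk E xs" "hd xs = x" "last xs = y" "length xs = 1" using gdist_ex[of x y] by auto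
  then show ?thesis by (cases xs) auto
qed

lemma d_zero_iff: "d x y = 0 \<longleftrightarrow> x = y" using d_zero by auto

lemma d_edge_le: "E x y \<Longrightarrow> d x y \<le> 1"
proof -
  assume "E x y"
  then have "walk E [x, y]" by (simp add: walk_Cons_iff)
  from gdist_le[OF this] show ?thesis by simp
qed

lemma d_edge: "E x y \<Longrightarrow> d x y = 1"
  using d_edge_le[of x y] d_zero[of x y] irr by fastforce

lemma d_one: "d x y = 1 \<Longrightarrow> E x y"
proof -
  assume "d x y = 1"
  then obtain xs where xs: "walk E xs" "hd xs = x" "last xs = y" "length xs = 2" using gdist_ex[of x y] by auto
  then obtain a b where "xs = [a, b]"
    by (cases xs; cases "tl xs") auto
  then show ?thesis using xs by (auto simp: walk_Cons_iff)
qed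

lemma d_tri: "d x z \<le> d x y + d y z"
proof -
  obtain xs where xs: "walk E xs" "hd xs = x" "last xs = y" "length xs = Suc (d x y)" using gdist_ex by blast
  obtain ys where ys: "walk E ys" "hd ys = y" "last ys = z" "length ys = Suc (d y z)" using gdist_ex by blast
  have w: "walk E (xs @ tl ys)" using walk_append[OF xs(1) ys(1)] xs ys by simp
  have "hd (xs @ tl ys) = x" using xs by (cases xs) auto
  moreover have "last (xs @ tl ys) = z" using xs ys by (cases ys) auto
  ultimately have "d x z \<le> length (xs @ tl ys) - 1" using gdist_le w by blast
  then show ?thesis using xs ys by simp
qed

lemma d_sym: "d x y = d y x"
proof -
  have *: "d a b \<le> d b a" for a b
  proof -
    obtain xs where xs: "walk E xs" "hd xs = b" "last xs = a" "length xs = Suc (d b a)" using gdist_ex by blast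
    have "walk E (rev xs)" using walk_rev[OF _ xs(1)] symE by blast
    moreover have "hd (rev xs) = a" "last (rev xs) = b" using xs
      by (auto simp: hd_rev last_rev)
    ultimately show ?thesis using gdist_le[of "rev xs" a b] xs by simp
  qed
  show ?thesis using *[of x y] *[of y x] by simp
qed

lemma d_step: "d x y = Suc k \<Longrightarrow> \<exists>z. E x z \<and> d z y = k"
proof -
  assume h: "d x y = Suc k"
  obtain xs where xs: "walk E xs" "hd xs = x" "last xs = y" "length xs = Suc (d x y)" using gdist_ex by blast
  then obtain zs where zs: "xs = x # zs" by (cases xs) auto
  then have ne: "zs \<noteq> []" using xs h by auto
  then have e: "E x (hd zs)" and w: "walk E zs" using xs zs by (auto simp: walk_Cons_iff)
  have "d (hd zs) y \<le> k" using gdist_le[OF w refl] xs zs ne h by auto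
  moreover have "Suc k \<le> d x (hd zs) + d (hd zs) y" using d_tri h by metis
  ultimately show ?thesis using e d_edge by force
qed

lemma d_lip: "E x y \<Longrightarrow> d x z \<le> d y z + 1"
proof -
  assume e: "E x y"
  have "d x z \<le> d x y + d y z" by (rule d_tri)
  then show ?thesis using d_edge[OF e] by simp
qed

lemma parity: assumes "E u v" shows "d x u \<noteq> d x v"
proof
  assume eq: "d x u = d x v"
  obtain m where m: "m \<in> interval E x u \<inter> interval E u v \<inter> interval E x v" using median_ex1 by blast
  have duv: "d u v = 1" "d v u = 1" using d_edge assms symE by auto
  then have "d u m + d m v = 1" using m by (simp add: interval_def)
  then have "d u m = 0 \<or> d m v = 0" by arith
  then have "m = u \<or> m = v" using d_zero by (metis d_sym)
  then show False
  proof
    assume "m = u" then show False using m eq duv by (simp add: interval_def)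
  next
    assume "m = v" then show False using m eq duv by (simp add: interval_def)
  qed
qed

lemma edge_cases: assumes "E u v" shows "d x v = d x u + 1 \<or> d x u = d x v + 1"
  using parity[OF assms, of x] d_lip[OF assms, of x] d_lip[OF symE[OF assms], of x] by (auto simp: d_sym)

end


context mg begin

lemma halfsp_iff: "x \<in> halfsp E u v \<longleftrightarrow> d x u < d x v" by (simp add: halfsp_def)

lemma halfsp_compl: "E u v \<Longrightarrow> x \<in> halfsp E v u \<longleftrightarrow> x \<notin> halfsp E u v"
  using parity[of u v x] by (auto simp: halfsp_def)

lemma dist2: assumes "E a b" "E a c" "b \<noteq> c" shows "d b c = 2"
proof -
  have "d b c \<le> d b a + d a c" by (rule d_tri)
  then have le: "d b c \<le> 2" using d_edge assms symE by (metis one_add_one)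
  have "d b c \<noteq> 0" using d_zero assms by blast
  moreover have "d b c \<noteq> 1"
  proof
    assume "d b c = 1" then have "E b c" by (rule d_one)
    then have "d a b \<noteq> d a c" by (rule parity)
    then show False using d_edge assms by simp
  qed
  ultimately show ?thesis using le by linarith
qed

lemma square:
  assumes e: "E a b" "E a a1" "E b b'" "E a1 b'" and ne: "a \<noteq> b'" "b \<noteq> a1"
    and x: "d x a < d x b"
  shows "d x a1 < d x b'"
proof (rule ccontr)
  assume "\<not> d x a1 < d x b'"
  then have lt: "d x b' < d x a1" using parity[OF e(4), of x] by simp
  have 1: "d x b = d x a + 1" using edge_cases[OF e(1), of x] x by auto
  have 2: "d x a1 = d x b' + 1" using edge_cases[OF e(4), of x] lt by auto
  have 3: "d x a1 \<le> d x a + 1" using d_lip[OF symE[OF e(2)], of x] by (simp add: d_sym)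
  have 4: "d x b \<le> d x b' + 1" using d_lip[OF e(3), of x] by (simp add: d_sym)
  have db': "d x b' = d x a" using 1 2 3 4 by linarith
  have da1: "d x a1 = d x a + 1" using 2 db' by simp
  have dba1: "d b a1 = 2" using dist2[OF e(1) e(2) ne(2)] .
  have ab: "d a b = 1" "d b a = 1" "d a a1 = 1" "d b' b = 1" "d b b' = 1" "d b' a1 = 1"
    using d_edge e symE by auto
  have "a \<in> interval E x b \<inter> interval E b a1 \<inter> interval E x a1"
    using ab 1 da1 dba1 by (simp add: interval_def)
  moreover have "b' \<in> interval E x b \<inter> interval E b a1 \<inter> interval E x a1"
    using ab 1 da1 db' dba1 by (simp add: interval_def)
  ultimately have "a = b'" using median_ex1[of x b a1] by blast
  then show False using ne by simp
qed

lemma key_aux: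
  assumes uv: "E u v"
  shows "\<And>a b. E a b \<Longrightarrow> d a u = k \<Longrightarrow> a \<in> halfsp E u v \<Longrightarrow> b \<in> halfsp E v u
     \<Longrightarrow> halfsp E a b = halfsp E u v"
proof (induction k)
  case 0
  then have "a = u" using d_zero d_sym by metis
  have "d b v < d b u" using 0 by (simp add: halfsp_def)
  moreover have "d b u \<le> d a u + 1" using d_lip[OF symE[OF 0(1)], of u] .
  ultimately have "d b v = 0" using 0 by simp
  then have "b = v" using d_zero by blast
  then show ?case using \<open>a = u\<close> by simp
next
  case (Suc k)
  have dav: "d a v = k + 2" using edge_cases[OF uv, of a] Suc.prems by (auto simp: halfsp_def)
  have dbu_le: "d b u \<le> k + 2" using d_lip[OF symE[OF Suc.prems(1)], of u] Suc.prems by simp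
  have dbv_ge: "k + 1 \<le> d b v" using d_lip[OF Suc.prems(1), of v] dav by simp
  have dbu: "d b u = d b v + 1" using edge_cases[OF uv, of b] Suc.prems by (auto simp: halfsp_def)
  have dbv: "d b v = k + 1" and dbu': "d b u = k + 2" using dbu_le dbv_ge dbu by auto
  obtain a1 where a1: "E a a1" "d a1 u = k" using d_step[of a u k] Suc.prems by auto
  have da1v: "d a1 v = k + 1"
  proof -
    have "d a v \<le> d a1 v + 1" using d_lip[OF a1(1)] .
    moreover have "d a1 v \<le> d a1 u + d u v" by (rule d_tri)
    ultimately show ?thesis using dav a1 d_edge[OF uv] by linarith
  qed
  have ba1: "b \<noteq> a1" using dbu' a1 by auto
  have dba1: "d b a1 = 2" using dist2[OF Suc.prems(1) a1(1) ba1] .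
  obtain m where m: "m \<in> interval E a1 b \<inter> interval E b v \<inter> interval E a1 v" using median_ex1 by blast
  have m1: "d a1 m + d m b = 2" "d b m + d m v = k + 1" "d a1 m + d m v = k + 1"
    using m dba1 dbv da1v d_sym[of a1 b] by (auto simp: interval_def)
  have "d a1 m = d b m" using m1 by simp
  then have dm: "d a1 m = 1" "d b m = 1" "d m v = k" using m1 d_sym[of m b] by auto
  have ea1m: "E a1 m" and ebm: "E b m" using d_one dm by auto
  have dmu: "k + 1 \<le> d m u" using d_lip[OF ebm, of u] dbu' by simp
  have "m \<in> halfsp E v u" using dmu dm by (simp add: halfsp_def)
  moreover have "a1 \<in> halfsp E u v" using a1 da1v by (simp add: halfsp_def)
  ultimately have IH: "halfsp E a1 m = halfsp E u v" using Suc.IH[OF ea1m a1(2)] by blast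
  have am: "a \<noteq> m" using dav dm by auto
  have s1: "x \<in> halfsp E a1 m" if "x \<in> halfsp E a b" for x
    using square[OF Suc.prems(1) a1(1) ebm ea1m am ba1] that by (simp add: halfsp_def)
  have s2: "x \<in> halfsp E m a1" if "x \<in> halfsp E b a" for x
    using square[OF symE[OF Suc.prems(1)] ebm a1(1) symE[OF ea1m] ba1 am] that by (simp add: halfsp_def)
  have "halfsp E a b = halfsp E a1 m"
  proof (intro set_eqI iffI)
    fix x assume "x \<in> halfsp E a b" then show "x \<in> halfsp E a1 m" by (rule s1)
  next
    fix x assume x: "x \<in> halfsp E a1 m"
    show "x \<in> halfsp E a b"
    proof (rule ccontr)
      assume "x \<notin> halfsp E a b"
      then have "x \<in> halfsp E b a" using halfsp_compl[OF Suc.prems(1)] by simp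
      then have "x \<in> halfsp E m a1" by (rule s2)
      then show False using x halfsp_compl[OF ea1m] by simp
    qed
  qed
  then show ?case using IH by simp
qed

lemma key:
  assumes "E u v" "E a b" "a \<in> halfsp E u v" "b \<in> halfsp E v u"
  shows "dual E a b = dual E u v"
proof -
  have h: "halfsp E a b = halfsp E u v" using key_aux[OF assms(1) assms(2) refl assms(3,4)] .
  have "halfsp E b a = halfsp E v u"
    using h halfsp_compl[OF assms(1)] halfsp_compl[OF assms(2)] by blast
  then show ?thesis using h by (simp add: dual_def)
qed

end


definition sepset :: "('a \<Rightarrow> 'a \<Rightarrow> bool) \<Rightarrow> 'a \<Rightarrow> 'a \<Rightarrow> 'a set set set" where
  "sepset E x y = {H \<in> hyperplanes E. \<exists>h\<in>H. x \<in> h \<and> y \<notin> h}"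

lemma dual_comm: "dual E u v = dual E v u" by (auto simp: dual_def)

context mg begin

lemma hypE: "H \<in> hyperplanes E \<Longrightarrow> \<exists>u v. E u v \<and> H = dual E u v"
  by (auto simp: hyperplanes_def)

lemma dual_hyp: "E u v \<Longrightarrow> dual E u v \<in> hyperplanes E"
  by (auto simp: hyperplanes_def)

lemma sep_dual: "E u v \<Longrightarrow> dual E u v \<in> sepset E x y \<longleftrightarrow> (x \<in> halfsp E u v \<longleftrightarrow> y \<notin> halfsp E u v)"
  using halfsp_compl[of u v] dual_hyp[of u v] by (auto simp: sepset_def dual_def)

lemma sep_xor: "H \<in> hyperplanes E \<Longrightarrow> H \<in> sepset E x z \<longleftrightarrow> ((H \<in> sepset E x y) \<noteq> (H \<in> sepset E y z))"
  using hypE sep_dual by metis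

lemma sep_sym: "sepset E x y = sepset E y x"
proof -
  have "H \<in> sepset E y x" if "H \<in> sepset E x y" for H x y
  proof -
    have "H \<in> hyperplanes E" using that by (simp add: sepset_def)
    then show ?thesis using that hypE sep_dual by metis
  qed
  then show ?thesis by blast
qed

lemma sep_refl[simp]: "sepset E x x = {}" by (auto simp: sepset_def)

lemma sep_adj: assumes "E x y" shows "sepset E x y = {dual E x y}"
proof
  show "{dual E x y} \<subseteq> sepset E x y"
    using sep_dual[OF assms, of x y] d_edge[OF assms] d_edge[OF symE[OF assms]]
    by (simp add: halfsp_def d_sym)
  show "sepset E x y \<subseteq> {dual E x y}"
  proof
    fix H assume H: "H \<in> sepset E x y"
    have "H \<in> hyperplanes E" using H by (simp add: sepset_def)
    then obtain u v where uv: "E u v" "H = dual E u v" using hypE by blast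
    then have "x \<in> halfsp E u v \<longleftrightarrow> y \<notin> halfsp E u v" using sep_dual H by blast
    then show "H \<in> {dual E x y}"
    proof (cases "x \<in> halfsp E u v")
      case True
      then have "y \<in> halfsp E v u" using \<open>x \<in> _ \<longleftrightarrow> _\<close> halfsp_compl[OF uv(1)] by simp
      then show ?thesis using key[OF uv(1) assms True] uv by simp
    next
      case False
      then have "x \<in> halfsp E v u" "y \<in> halfsp E u v" using \<open>x \<in> _ \<longleftrightarrow> _\<close> halfsp_compl[OF uv(1)] by auto
      then have "dual E x y = dual E v u" using key[OF symE[OF uv(1)] assms] by blast
      then show ?thesis using uv dual_comm[of E v u] by simp
    qed
  qed
qed

lemma card_sep: "finite (sepset E x y) \<and> card (sepset E x y) = d x y"
proof (induction "d x y" arbitrary: x)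
  case 0
  then show ?case using d_zero[of x y] by simp
next
  case (Suc k)
  then obtain z where z: "E x z" "d z y = k" using d_step by metis
  have IH: "finite (sepset E z y)" "card (sepset E z y) = k" using Suc.hyps(1)[of z] z by auto
  have nin: "dual E x z \<notin> sepset E z y"
  proof -
    have "d y z < d y x" using z Suc.hyps(2) d_sym by (metis lessI)
    then have "y \<notin> halfsp E x z" "z \<notin> halfsp E x z"
      using d_edge[OF z(1)] by (auto simp: halfsp_def d_sym)
    then show ?thesis using sep_dual[OF z(1)] by simp
  qed
  have eq: "sepset E x y = insert (dual E x z) (sepset E z y)"
  proof (intro set_eqI)
    fix H
    show "H \<in> sepset E x y \<longleftrightarrow> H \<in> insert (dual E x z) (sepset E z y)"
    proof (cases "H \<in> hyperplanes E")
      case True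
      then show ?thesis using sep_xor[OF True, of x y z] sep_adj[OF z(1)] nin by auto
    next
      case False
      then show ?thesis using dual_hyp[OF z(1)] by (auto simp: sepset_def)
    qed
  qed
  show ?case using eq IH nin Suc.hyps(2) by simp
qed

end


definition hr :: "('a \<Rightarrow> 'a \<Rightarrow> bool) \<Rightarrow> (nat \<Rightarrow> 'a) \<Rightarrow> nat \<Rightarrow> 'a set set" where
  "hr E \<alpha> n = dual E (\<alpha> n) (\<alpha> (Suc n))"

context mg begin

lemma ray_d: "geodesic_ray E \<alpha> \<Longrightarrow> d (\<alpha> i) (\<alpha> j) = (if i \<le> j then j - i else i - j)"
  unfolding geodesic_ray_def by (drule spec[of _ i], drule spec[of _ j]) auto

lemma ray_E: "geodesic_ray E \<alpha> \<Longrightarrow> E (\<alpha> n) (\<alpha> (Suc n))"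
  using ray_d[of \<alpha> n "Suc n"] d_one by simp

lemma ray_hyp: "geodesic_ray E \<alpha> \<Longrightarrow> hr E \<alpha> n \<in> hyperplanes E"
  using ray_E dual_hyp by (simp add: hr_def)

lemma ray_in_half: "geodesic_ray E \<alpha> \<Longrightarrow> \<alpha> i \<in> halfsp E (\<alpha> k) (\<alpha> (Suc k)) \<longleftrightarrow> i \<le> k"
  using ray_d[of \<alpha> i k] ray_d[of \<alpha> i "Suc k"] by (auto simp: halfsp_def)

lemma ray_sep_iff: "geodesic_ray E \<alpha> \<Longrightarrow> hr E \<alpha> k \<in> sepset E (\<alpha> i) (\<alpha> j) \<longleftrightarrow> ((i \<le> k) \<noteq> (j \<le> k))"
  unfolding hr_def using sep_dual[OF ray_E] ray_in_half by blast

lemma ray_inj: assumes "geodesic_ray E \<alpha>" shows "inj (hr E \<alpha>)"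
proof (rule injI)
  have *: False if "hr E \<alpha> k = hr E \<alpha> m" "k < m" for k m
    using ray_sep_iff[OF assms, of k k "Suc k"] ray_sep_iff[OF assms, of m k "Suc k"] that by simp
  fix k m assume "hr E \<alpha> k = hr E \<alpha> m"
  then show "k = m" using *[of k m] *[of m k] by (metis linorder_neqE_nat)
qed

lemma ray_sep: assumes "geodesic_ray E \<alpha>" "a \<le> b"
  shows "sepset E (\<alpha> a) (\<alpha> b) = hr E \<alpha> ` {a..<b}"
proof -
  have sub: "hr E \<alpha> ` {a..<b} \<subseteq> sepset E (\<alpha> a) (\<alpha> b)"
    using ray_sep_iff[OF assms(1)] by auto
  have "card (hr E \<alpha> ` {a..<b}) = b - a"
    using card_image[OF inj_on_subset[OF ray_inj[OF assms(1)]]] by simp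
  also have "\<dots> = card (sepset E (\<alpha> a) (\<alpha> b))" using card_sep ray_d[OF assms(1), of a b] assms(2) by simp
  finally show ?thesis using card_subset_eq[OF _ sub] card_sep by metis
qed

lemma W_ray_eq: "W_ray E \<alpha> = range (hr E \<alpha>)"
  by (auto simp: W_ray_def hr_def)

end


lemma ae_intro: "finite (A - B) \<Longrightarrow> finite (B - A) \<Longrightarrow> almost_equiv A B"
  by (simp add: almost_equiv_def)
lemma ae_sym: "almost_equiv A B \<Longrightarrow> almost_equiv B A"
  by (simp add: almost_equiv_def Un_commute)
lemma ae_trans: "almost_equiv A B \<Longrightarrow> almost_equiv B C \<Longrightarrow> almost_equiv A C"
proof -
  assume a: "almost_equiv A B" "almost_equiv B C"
  have "(A - C) \<union> (C - A) \<subseteq> ((A - B) \<union> (B - A)) \<union> ((B - C) \<union> (C - B))" by blast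
  then show ?thesis using a unfolding almost_equiv_def by (meson finite_UnI finite_subset)
qed

definition mkline :: "(nat \<Rightarrow> 'a) \<Rightarrow> (nat \<Rightarrow> 'a) \<Rightarrow> 'a list \<Rightarrow> nat \<Rightarrow> nat \<Rightarrow> nat \<Rightarrow> int \<Rightarrow> 'a" where
  "mkline \<alpha> \<beta> p N M L i = (if i \<le> 0 then \<alpha> (N + nat (-i)) else if i \<le> int L then p ! nat i
     else \<beta> (M + nat (i - int L)))"

context mg begin

lemma lip_path: assumes "\<And>i. d (f i) (f (i+1)) \<le> 1" shows "d (f m) (f (m + int k)) \<le> k"
proof (induction k)
  case 0 then show ?case by simp
next
  case (Suc k)
  have "d (f m) (f (m + int (Suc k))) \<le> d (f m) (f (m + int k)) + d (f (m + int k)) (f (m + int k + 1))"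
    using d_tri by (metis add.assoc of_nat_Suc add.commute)
  then show ?case using Suc assms[of "m + int k"] by simp
qed

lemma line_exists:
  assumes ga: "geodesic_ray E \<alpha>" and gb: "geodesic_ray E \<beta>"
    and fin: "finite (W_ray E \<alpha> \<inter> W_ray E \<beta>)"
  shows "\<exists>\<gamma>. geodesic_line E \<gamma> \<and> almost_equiv (W_neg E \<gamma>) (W_ray E \<alpha>) \<and> almost_equiv (W_pos E \<gamma>) (W_ray E \<beta>)"
proof -
  define S0 where "S0 = sepset E (\<alpha> 0) (\<beta> 0)"
  define X where "X = (W_ray E \<alpha> \<inter> W_ray E \<beta>) \<union> S0"
  have finX: "finite X" unfolding X_def S0_def using fin card_sep by blast
  have "finite (hr E \<alpha> -` X)" by (rule finite_vimageI[OF finX ray_inj[OF ga]])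
  then obtain N where N: "\<And>j. j \<ge> N \<Longrightarrow> hr E \<alpha> j \<notin> X"
    using finite_nat_set_iff_bounded by (metis not_le vimageI)
  have "finite (hr E \<beta> -` X)" by (rule finite_vimageI[OF finX ray_inj[OF gb]])
  then obtain M where M: "\<And>j. j \<ge> M \<Longrightarrow> hr E \<beta> j \<notin> X"
    using finite_nat_set_iff_bounded by (metis not_le vimageI)
  have Na: "hr E \<alpha> j \<notin> W_ray E \<beta>" "hr E \<alpha> j \<notin> S0" if "j \<ge> N" for j
    using N[OF that] by (auto simp: X_def W_ray_eq)
  have Mb: "hr E \<beta> j \<notin> W_ray E \<alpha>" "hr E \<beta> j \<notin> S0" if "j \<ge> M" for j
    using M[OF that] by (auto simp: X_def W_ray_eq)
  define L where "L = d (\<alpha> N) (\<beta> M)"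
  obtain p where p: "walk E p" "hd p = \<alpha> N" "last p = \<beta> M" "length p = Suc L"
    using gdist_ex unfolding L_def by blast
  have p0: "p ! 0 = \<alpha> N" using p by (metis hd_conv_nth list.size(3) nat.distinct(1))
  have pL: "p ! L = \<beta> M" using p by (metis diff_Suc_1 last_conv_nth list.size(3) nat.distinct(1))
  have pE: "i < L \<Longrightarrow> E (p ! i) (p ! Suc i)" for i using p unfolding walk_def by simp
  define \<gamma> where "\<gamma> = mkline \<alpha> \<beta> p N M L"
  have gneg: "i \<le> 0 \<Longrightarrow> \<gamma> i = \<alpha> (N + nat (-i))" for i by (simp add: \<gamma>_def mkline_def)
  have gmid: "0 \<le> i \<Longrightarrow> i \<le> int L \<Longrightarrow> \<gamma> i = p ! nat i" for i
    using p0 by (auto simp: \<gamma>_def mkline_def)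
  have gpos: "int L \<le> i \<Longrightarrow> \<gamma> i = \<beta> (M + nat (i - int L))" for i
    using p0 pL by (auto simp: \<gamma>_def mkline_def)
  have adj: "d (\<gamma> i) (\<gamma> (i+1)) \<le> 1" for i
  proof -
    consider "i + 1 \<le> 0" | "0 \<le> i \<and> i + 1 \<le> int L" | "int L \<le> i" by linarith
    then show ?thesis
    proof cases
      case 1
      then have "\<gamma> i = \<alpha> (Suc (N + nat (-(i+1))))" "\<gamma> (i+1) = \<alpha> (N + nat (-(i+1)))"
        using gneg[of i] gneg[of "i+1"] by (auto simp: nat_diff_distrib')
      then show ?thesis using ray_d[OF ga] by simp
    next
      case 2
      then have "\<gamma> i = p ! nat i" "\<gamma> (i+1) = p ! Suc (nat i)" using gmid[of i] gmid[of "i+1"]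
        by (auto simp: nat_add_distrib)
      moreover have "nat i < L" using 2 by linarith
      ultimately show ?thesis using pE[of "nat i"] d_edge_le by simp
    next
      case 3
      moreover have "nat (i + 1 - int L) = Suc (nat (i - int L))" using 3 by (simp add: Suc_nat_eq_nat_zadd1 algebra_simps)
      ultimately have "\<gamma> i = \<beta> (M + nat (i - int L))" "\<gamma> (i+1) = \<beta> (Suc (M + nat (i - int L)))"
        using gpos[of i] gpos[of "i+1"] by auto
      then show ?thesis using ray_d[OF gb] by simp
    qed
  qed
  have low: "2 * n + L \<le> d (\<alpha> (N + n)) (\<beta> (M + n))" for n
  proof -
    define A where "A = hr E \<alpha> ` {N..<N+n}"
    define B where "B = hr E \<beta> ` {M..<M+n}"
    define S where "S = sepset E (\<alpha> N) (\<beta> M)"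
    have sA: "sepset E (\<alpha> N) (\<alpha> (N+n)) = A" unfolding A_def by (rule ray_sep[OF ga]) simp
    have sB: "sepset E (\<beta> M) (\<beta> (M+n)) = B" unfolding B_def by (rule ray_sep[OF gb]) simp
    have s0a: "sepset E (\<alpha> 0) (\<alpha> N) = hr E \<alpha> ` {0..<N}" by (rule ray_sep[OF ga]) simp
    have s0b: "sepset E (\<beta> 0) (\<beta> M) = hr E \<beta> ` {0..<M}" by (rule ray_sep[OF gb]) simp
    have xorS: "H \<in> S \<longleftrightarrow> ((H \<in> sepset E (\<alpha> 0) (\<alpha> N)) \<noteq> ((H \<in> S0) \<noteq> (H \<in> sepset E (\<beta> 0) (\<beta> M))))"
      if "H \<in> hyperplanes E" for H
      using sep_xor[OF that, of "\<alpha> N" "\<beta> M" "\<alpha> 0"] sep_xor[OF that, of "\<alpha> 0" "\<beta> M" "\<beta> 0"]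
        sep_sym[of "\<alpha> N" "\<alpha> 0"] unfolding S_def S0_def by blast
    have AS: "H \<notin> S" if "H \<in> A" for H
    proof -
      from that obtain j where j0: "j \<in> {N..<N+n}" "H = hr E \<alpha> j" unfolding A_def by blast
      then have j: "N \<le> j" "H = hr E \<alpha> j" by auto
      have "H \<notin> sepset E (\<alpha> 0) (\<alpha> N)" using ray_sep_iff[OF ga, of j 0 N] j by simp
      moreover have "H \<notin> sepset E (\<beta> 0) (\<beta> M)" using Na(1)[OF j(1)] j s0b by (auto simp: W_ray_eq)
      ultimately show ?thesis using xorS[of H] Na(2)[OF j(1)] j ray_hyp[OF ga] by blast
    qed
    have BS: "H \<notin> S" if "H \<in> B" for H
    proof -
      from that obtain j where j0: "j \<in> {M..<M+n}" "H = hr E \<beta> j" unfolding B_def by blast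
      then have j: "M \<le> j" "H = hr E \<beta> j" by auto
      have "H \<notin> sepset E (\<beta> 0) (\<beta> M)" using ray_sep_iff[OF gb, of j 0 M] j by simp
      moreover have "H \<notin> sepset E (\<alpha> 0) (\<alpha> N)" using Mb(1)[OF j(1)] j s0a by (auto simp: W_ray_eq)
      ultimately show ?thesis using xorS[of H] Mb(2)[OF j(1)] j ray_hyp[OF gb] by blast
    qed
    have AB: "A \<inter> B = {}"
      using Na(1) unfolding A_def B_def W_ray_eq by (auto, metis rangeI)
    have sub: "A \<union> S \<union> B \<subseteq> sepset E (\<alpha> (N + n)) (\<beta> (M + n))"
    proof
      fix H assume H: "H \<in> A \<union> S \<union> B"
      have hyp: "H \<in> hyperplanes E" using H sA sB by (auto simp: S_def sepset_def)
      have e: "H \<in> sepset E (\<alpha> (N + n)) (\<beta> (M + n)) \<longleftrightarrow>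
          ((H \<in> A) \<noteq> ((H \<in> S) \<noteq> (H \<in> B)))"
        using sep_xor[OF hyp, of "\<alpha> (N+n)" "\<beta> (M+n)" "\<alpha> N"] sep_xor[OF hyp, of "\<alpha> N" "\<beta> (M+n)" "\<beta> M"]
          sep_sym[of "\<alpha> (N+n)" "\<alpha> N"] sA sB unfolding S_def by blast
      show "H \<in> sepset E (\<alpha> (N + n)) (\<beta> (M + n))" using e H AS BS AB by blast
    qed
    have cA: "card A = n" unfolding A_def
      using card_image[OF inj_on_subset[OF ray_inj[OF ga]]] by simp
    have cB: "card B = n" unfolding B_def
      using card_image[OF inj_on_subset[OF ray_inj[OF gb]]] by simp
    have cS: "card S = L" "finite S" unfolding S_def L_def using card_sep by auto
    have fA: "finite A" "finite B" unfolding A_def B_def by auto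
    have d1: "A \<inter> S = {}" using AS by blast
    have d2: "(A \<union> S) \<inter> B = {}" using BS AB by blast
    have "card (A \<union> S) = n + L" using card_Un_disjoint[OF fA(1) cS(2) d1] cA cS by simp
    then have "card (A \<union> S \<union> B) = n + L + n"
      using card_Un_disjoint[OF _ fA(2) d2] fA cS cB by simp
    moreover have "card (A \<union> S \<union> B) \<le> d (\<alpha> (N + n)) (\<beta> (M + n))"
      using card_mono[OF _ sub] card_sep by metis
    ultimately show ?thesis by simp
  qed
  have geo: "geodesic_line E \<gamma>"
  proof -
    have le: "int (d (\<gamma> m) (\<gamma> n)) = n - m" if mn: "m \<le> n" for m n
    proof -
      have up: "d (\<gamma> m) (\<gamma> n) \<le> nat (n - m)"
        using lip_path[of \<gamma>, OF adj, of m "nat (n - m)"] mn by simp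
      define t where "t = nat (max (-m) (n - int L))"
      have t1: "-int t \<le> m" and t2: "n \<le> int L + int t" unfolding t_def by auto
      have a: "d (\<gamma> (- int t)) (\<gamma> m) \<le> nat (m + int t)"
        using lip_path[of \<gamma>, OF adj, of "- int t" "nat (m + int t)"] t1 by simp
      have b: "d (\<gamma> n) (\<gamma> (int L + int t)) \<le> nat (int L + int t - n)"
        using lip_path[of \<gamma>, OF adj, of n "nat (int L + int t - n)"] t2 by simp
      have ga': "\<gamma> (- int t) = \<alpha> (N + t)" using gneg by simp
      have gb': "\<gamma> (int L + int t) = \<beta> (M + t)" using gpos by simp
      have "2 * t + L \<le> d (\<gamma> (- int t)) (\<gamma> (int L + int t))" using low[of t] ga' gb' by simp
      also have "\<dots> \<le> d (\<gamma> (- int t)) (\<gamma> m) + d (\<gamma> m) (\<gamma> (int L + int t))" by (rule d_tri)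
      also have "\<dots> \<le> d (\<gamma> (- int t)) (\<gamma> m) + (d (\<gamma> m) (\<gamma> n) + d (\<gamma> n) (\<gamma> (int L + int t)))"
        using d_tri by simp
      finally have "2 * t + L \<le> nat (m + int t) + d (\<gamma> m) (\<gamma> n) + nat (int L + int t - n)"
        using a b by linarith
      then show ?thesis using up t1 t2 mn by linarith
    qed
    show ?thesis unfolding geodesic_line_def
    proof (intro allI)
      fix m n
      show "int (d (\<gamma> m) (\<gamma> n)) = \<bar>m - n\<bar>"
      proof (cases "m \<le> n")
        case True then show ?thesis using le[OF True] by simp
      next
        case False then show ?thesis using le[of n m] d_sym[of "\<gamma> m" "\<gamma> n"] by simp
      qed
    qed
  qed
  have wneg: "W_neg E \<gamma> = hr E \<alpha> ` {N..}"
  proof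
    show "W_neg E \<gamma> \<subseteq> hr E \<alpha> ` {N..}"
    proof
      fix H assume "H \<in> W_neg E \<gamma>"
      then obtain n where n: "n \<le> 0" "H = dual E (\<gamma> (n - 1)) (\<gamma> n)" by (auto simp: W_neg_def)
      moreover have "nat (1 - n) = Suc (nat (-n))" using n by (simp add: Suc_nat_eq_nat_zadd1 algebra_simps)
      ultimately have "\<gamma> (n - 1) = \<alpha> (Suc (N + nat (-n)))" "\<gamma> n = \<alpha> (N + nat (-n))"
        using gneg[of n] gneg[of "n - 1"] by auto
      then have "H = hr E \<alpha> (N + nat (-n))" using n dual_comm by (metis hr_def)
      then show "H \<in> hr E \<alpha> ` {N..}" by simp
    qed
  next
    show "hr E \<alpha> ` {N..} \<subseteq> W_neg E \<gamma>"
    proof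
      fix H assume "H \<in> hr E \<alpha> ` {N..}"
      then obtain j where j: "N \<le> j" "H = hr E \<alpha> j" by auto
      define n where "n = - int (j - N)"
      have e1: "N + nat (- n) = j" "N + nat (- (n - 1)) = Suc j" using j unfolding n_def by auto
      have "\<gamma> (n - 1) = \<alpha> (Suc j)" "\<gamma> n = \<alpha> j"
        using gneg[of n] gneg[of "n - 1"] e1 unfolding n_def by auto
      then have "H = dual E (\<gamma> (n - 1)) (\<gamma> n)" using j dual_comm by (metis hr_def)
      moreover have "n \<le> 0" unfolding n_def by simp
      ultimately show "H \<in> W_neg E \<gamma>" unfolding W_neg_def by blast
    qed
  qed
  have ae1: "almost_equiv (W_neg E \<gamma>) (W_ray E \<alpha>)"
  proof (rule ae_intro)
    have "W_neg E \<gamma> - W_ray E \<alpha> = {}" using wneg by (auto simp: W_ray_eq)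
    then show "finite (W_neg E \<gamma> - W_ray E \<alpha>)" by (metis finite.emptyI)
    have "W_ray E \<alpha> - W_neg E \<gamma> \<subseteq> hr E \<alpha> ` {..<N}"
      unfolding wneg W_ray_eq by (auto, metis atLeast_iff imageI lessThan_iff not_le)
    then show "finite (W_ray E \<alpha> - W_neg E \<gamma>)" by (rule finite_subset) simp
  qed
  have ae2: "almost_equiv (W_pos E \<gamma>) (W_ray E \<beta>)"
  proof (rule ae_intro)
    have "W_pos E \<gamma> - W_ray E \<beta> \<subseteq> (\<lambda>i. dual E (p ! i) (p ! Suc i)) ` {..<L}"
    proof
      fix H assume H: "H \<in> W_pos E \<gamma> - W_ray E \<beta>"
      then obtain n where n: "0 \<le> n" "H = dual E (\<gamma> n) (\<gamma> (n + 1))" by (auto simp: W_pos_def)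
      show "H \<in> (\<lambda>i. dual E (p ! i) (p ! Suc i)) ` {..<L}"
      proof (cases "n < int L")
        case True
        then have "\<gamma> n = p ! nat n" "\<gamma> (n+1) = p ! Suc (nat n)" using gmid[of n] gmid[of "n+1"] n
          by (auto simp: nat_add_distrib)
        then show ?thesis using n True by force
      next
        case False
        moreover have "nat (n + 1 - int L) = Suc (nat (n - int L))" using False by (simp add: Suc_nat_eq_nat_zadd1 algebra_simps)
        ultimately have "\<gamma> n = \<beta> (M + nat (n - int L))" "\<gamma> (n+1) = \<beta> (Suc (M + nat (n - int L)))"
          using gpos[of n] gpos[of "n+1"] by auto
        then have "H \<in> W_ray E \<beta>" using n by (auto simp: W_ray_def)
        then show ?thesis using H by simp
      qed
    qed
    then show "finite (W_pos E \<gamma> - W_ray E \<beta>)" by (rule finite_subset) simp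
    have "W_ray E \<beta> - W_pos E \<gamma> \<subseteq> hr E \<beta> ` {..<M}"
    proof
      fix H assume H: "H \<in> W_ray E \<beta> - W_pos E \<gamma>"
      then obtain j where j: "H = hr E \<beta> j" by (auto simp: W_ray_eq)
      show "H \<in> hr E \<beta> ` {..<M}"
      proof (cases "j < M")
        case True then show ?thesis using j by simp
      next
        case False
        define n where "n = int L + int (j - M)"
        have e1: "M + nat (n - int L) = j" "M + nat (n + 1 - int L) = Suc j" using False unfolding n_def by auto
        have "\<gamma> n = \<beta> j" "\<gamma> (n + 1) = \<beta> (Suc j)"
          using gpos[of n] gpos[of "n+1"] e1 unfolding n_def by auto
        moreover have "0 \<le> n" unfolding n_def by simp
        ultimately have "H \<in> W_pos E \<gamma>" using j unfolding W_pos_def hr_def by (metis (mono_tags, lifting) mem_Collect_eq)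
        then show ?thesis using H by simp
      qed
    qed
    then show "finite (W_ray E \<beta> - W_pos E \<gamma>)" by (rule finite_subset) simp
  qed
  show ?thesis using geo ae1 ae2 by blast
qed

end


lemma UBS_Int: assumes A: "UBS E A" and B: "UBS E B" and inf: "infinite (A \<inter> B)" shows "UBS E (A \<inter> B)"
proof -
  have hA: "A \<subseteq> hyperplanes E" "inseparable E A" "unidirectional A"
    "\<not> (\<exists>X\<in>A. \<exists>Y\<in>A. \<exists>Z\<in>A. facing_triple X Y Z)" using A unfolding UBS_def by simp_all
  have iB: "inseparable E B" using B unfolding UBS_def by simp
  have i: "inseparable E (A \<inter> B)" using hA(2) iB unfolding inseparable_def by blast
  have h: "A \<inter> B \<subseteq> hyperplanes E" using hA(1) by blast
  have f: "\<not> (\<exists>X\<in>A \<inter> B. \<exists>Y\<in>A \<inter> B. \<exists>Z\<in>A \<inter> B. facing_triple X Y Z)"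
    using hA(4) by blast
  have u: "unidirectional (A \<inter> B)"
    unfolding unidirectional_def
  proof
    fix U assume U: "U \<in> A \<inter> B"
    then have "U \<in> A" by simp
    then obtain s where s: "s \<in> U" "finite {W \<in> A. lies_in U s W}"
      using hA(3) unfolding unidirectional_def by meson
    have "{W \<in> A \<inter> B. lies_in U s W} \<subseteq> {W \<in> A. lies_in U s W}" by blast
    then have "finite {W \<in> A \<inter> B. lies_in U s W}" using s(2) by (rule finite_subset)
    then show "\<exists>s\<in>U. finite {W \<in> A \<inter> B. lies_in U s W}" using s(1) by (intro bexI[where x=s])
  qed
  show ?thesis unfolding UBS_def by (intro conjI h inf i u f)
qed
lemma dim1: "UBS_dim E U 1 \<Longrightarrow> \<exists>U0. minimal_UBS E U0 \<and> almost_equiv U U0"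
proof -
  assume "UBS_dim E U 1"
  then obtain Us :: "nat \<Rightarrow> _" where u: "\<forall>i<1. minimal_UBS E (Us i)" "almost_equiv U (\<Union>i<1. Us i)"
    unfolding UBS_dim_def by (elim exE conjE) (intro that)
  have "minimal_UBS E (Us 0)" using u(1) by simp
  moreover have "(\<Union>i<(1::nat). Us i) = Us 0" by (simp add: lessThan_Suc)
  ultimately show ?thesis using u(2) by (intro exI[where x="Us 0"]) simp
qed

theorem main:
  fixes E :: "'a \<Rightarrow> 'a \<Rightarrow> bool"
  assumes mgE: "median_graph E" and fv: "fully_visible E"
  shows "optical E"
  unfolding optical_def
proof (intro allI impI)
  interpret mg E by (rule mg.intro[OF mgE])
  fix U V assume h: "UBS E U \<and> UBS_dim E U 1 \<and> UBS E V \<and> UBS_dim E V 1 \<and> \<not> visible_pair E U V"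
  have hU: "UBS E U" "UBS_dim E U (Suc 0)" and hV: "UBS E V" "UBS_dim E V (Suc 0)"
    and nv: "\<not> visible_pair E U V" using h by auto
  have fv': "\<And>W. UBS E W \<Longrightarrow> UBS_dim E W (Suc 0) \<Longrightarrow> visible E W"
    using fv unfolding fully_visible_def by (drule_tac x=W in spec, drule_tac x=0 in spec) simp
  have visU: "visible E U" using fv' hU by blast
  have visV: "visible E V" using fv' hV by blast
  obtain \<alpha> where \<alpha>: "geodesic_ray E \<alpha>" "almost_equiv (W_ray E \<alpha>) U" using visU by (auto simp: visible_def)
  obtain \<beta> where \<beta>: "geodesic_ray E \<beta>" "almost_equiv (W_ray E \<beta>) V" using visV by (auto simp: visible_def)
  obtain U0 where U0: "minimal_UBS E U0" "almost_equiv U U0" using dim1[of E U] hU by auto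
  obtain V0 where V0: "minimal_UBS E V0" "almost_equiv V V0" using dim1[of E V] hV by auto
  show "almost_equiv U V"
  proof (cases "finite (U0 \<inter> V0)")
    case True
    have aU: "almost_equiv (W_ray E \<alpha>) U0" using \<alpha>(2) U0(2) by (rule ae_trans)
    have aV: "almost_equiv (W_ray E \<beta>) V0" using \<beta>(2) V0(2) by (rule ae_trans)
    have "W_ray E \<alpha> \<inter> W_ray E \<beta> \<subseteq> (U0 \<inter> V0) \<union> (W_ray E \<alpha> - U0) \<union> (W_ray E \<beta> - V0)" by blast
    moreover have "finite ((U0 \<inter> V0) \<union> (W_ray E \<alpha> - U0) \<union> (W_ray E \<beta> - V0))"
      using True aU aV unfolding almost_equiv_def by (meson finite_Un)
    ultimately have "finite (W_ray E \<alpha> \<inter> W_ray E \<beta>)" by (rule finite_subset)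
    then obtain \<gamma> where \<gamma>: "geodesic_line E \<gamma>" "almost_equiv (W_neg E \<gamma>) (W_ray E \<alpha>)"
      "almost_equiv (W_pos E \<gamma>) (W_ray E \<beta>)" using line_exists[OF \<alpha>(1) \<beta>(1)] by blast
    have "almost_equiv (W_neg E \<gamma>) U" using \<gamma>(2) \<alpha>(2) by (rule ae_trans)
    moreover have "almost_equiv (W_pos E \<gamma>) V" using \<gamma>(3) \<beta>(2) by (rule ae_trans)
    ultimately have "visible_pair E U V" unfolding visible_pair_def
      using visU visV \<gamma>(1) by blast
    then show ?thesis using nv by blast
  next
    case False
    have uU: "UBS E U0" and mU: "\<And>W. W \<subseteq> U0 \<Longrightarrow> UBS E W \<Longrightarrow> almost_equiv W U0"
      using U0(1) unfolding minimal_UBS_def by auto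
    have uV: "UBS E V0" and mV: "\<And>W. W \<subseteq> V0 \<Longrightarrow> UBS E W \<Longrightarrow> almost_equiv W V0"
      using V0(1) unfolding minimal_UBS_def by auto
    have I: "UBS E (U0 \<inter> V0)" by (rule UBS_Int[OF uU uV False])
    have a1: "almost_equiv (U0 \<inter> V0) U0" by (rule mU[OF _ I]) blast
    have a2: "almost_equiv (U0 \<inter> V0) V0" by (rule mV[OF _ I]) blast
    have "almost_equiv U0 V0" using ae_sym[OF a1] a2 by (rule ae_trans)
    then have "almost_equiv U V0" using ae_trans[OF U0(2)] by blast
    then show ?thesis using ae_sym[OF V0(2)] by (rule ae_trans)
  qed
qed


theorem theorem3p24:
  fixes E :: "'a \<Rightarrow> 'a \<Rightarrow> bool"
  assumes "CAT0_cube_complex E"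
    and "no_infinite_crossing_family E"
    and "fully_visible E"
  shows "optical E"
  using main[OF assms(1) assms(3)] .

end
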